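(* Let $f$ be a good piecewise expanding $C^1$ unimodal map. Suppose $(f_n)$ is a sequence of piecewise expanding $C^1$ unimodal maps with $|f_n-f|_1\to0$, and $v_n,v\in\mathcal B^0(I)$ satisfy $|v_n-v|_0\to0$ and $J(f_n,v_n)=0$ for all $n$. Then $J(f,v)=0$.
   Context: Let $I=[-1,1]$ and $c=0$. For $k\ge0$, $\mathcal B^k(I)$ is the Banach space of continuous $f:I\to\mathbb R$ that are $C^k$ on $[-1,0]$ and on $[0,1]$ with $f(1)=f(-1)$, normed by $|f|_k=\max\{|f|_{C^k[-1,0]},|f|_{C^k[0,1]}\}$, $|f|_{C^k(Q)}=\max_{0\le i\le k}\sup_Q|D^if|$. A piecewise expanding $C^1$ unimodal map is an $f\in\mathcal B^1(I)$ with $f(-1)=f(1)=-1$, $\inf_{x\in[-1,0]}Df(x)>1$, $\sup_{x\in[0,1]}Df(x)<-1$ and $f(0)\le1$. Such $f$ is good if either $c$ is not periodic, or $c$ has prime period $p\ge2$ and $|Df^{p-1}(f(c))|\min\{|Df^+(c)|,|Df^-(c)|\}>2$ ($Df^\pm(c)$ one-sided derivatives at $c$). For bounded $v:I\to\mathbb R$: if $c$ is not periodic for $f$, $J(f,v)=\sum_{i=0}^\infty \frac{v(f^i(c))}{Df^i(f(c))}$; if $c$ has prime period $p$, $J(f,v)=\sum_{i=0}^{p-1}\frac{v(f^i(c))}{Df^i(f(c))}$. *)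

theory Defs
  imports "HOL-Analysis.Analysis"
begin

text \<open>I = [-1,1], c = 0. Left piece Q_L = [-1,0], right piece Q_R = [0,1].
  Iterated one-sided derivatives of the restriction of f to a piece Q.\<close>

fun pD :: "real set \<Rightarrow> nat \<Rightarrow> (real \<Rightarrow> real) \<Rightarrow> real \<Rightarrow> real" where
  "pD Q 0 f = f"
| "pD Q (Suc i) f = (\<lambda>x. vector_derivative (pD Q i f) (at x within Q))"

definition Ck_on :: "nat \<Rightarrow> real set \<Rightarrow> (real \<Rightarrow> real) \<Rightarrow> bool" where
  "Ck_on k Q f \<longleftrightarrow>
     (\<forall>i<k. \<forall>x\<in>Q. (pD Q i f has_real_derivative pD Q (Suc i) f x) (at x within Q))
     \<and> continuous_on Q (pD Q k f)"

definition Bk :: "nat \<Rightarrow> (real \<Rightarrow> real) \<Rightarrow> bool" where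
  "Bk k f \<longleftrightarrow> continuous_on {-1..1} f \<and> Ck_on k {-1..0} f \<and> Ck_on k {0..1} f
     \<and> f 1 = f (-1)"

definition Cnorm :: "nat \<Rightarrow> real set \<Rightarrow> (real \<Rightarrow> real) \<Rightarrow> real" where
  "Cnorm k Q f = Max ((\<lambda>i. SUP x\<in>Q. \<bar>pD Q i f x\<bar>) ` {..k})"

definition Bnorm :: "nat \<Rightarrow> (real \<Rightarrow> real) \<Rightarrow> real" where
  "Bnorm k f = max (Cnorm k {-1..0} f) (Cnorm k {0..1} f)"

definition pw_expanding_unimodal :: "(real \<Rightarrow> real) \<Rightarrow> bool" where
  "pw_expanding_unimodal f \<longleftrightarrow> Bk 1 f \<and> f (-1) = -1 \<and> f 1 = -1
     \<and> (INF x\<in>{-1..0}. pD {-1..0} 1 f x) > 1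
     \<and> (SUP x\<in>{0..1}. pD {0..1} 1 f x) < -1
     \<and> f 0 \<le> 1"

text \<open>Derivative of f away from c = 0 (the value at 0 is never used below).\<close>
definition Df :: "(real \<Rightarrow> real) \<Rightarrow> real \<Rightarrow> real" where
  "Df f x = (if x \<le> 0 then pD {-1..0} 1 f x else pD {0..1} 1 f x)"

text \<open>Df^i(y) = product of Df along the first i points of the orbit of y (chain rule).\<close>
definition Dfn :: "(real \<Rightarrow> real) \<Rightarrow> nat \<Rightarrow> real \<Rightarrow> real" where
  "Dfn f i y = (\<Prod>j<i. Df f ((f ^^ j) y))"

definition c_periodic :: "(real \<Rightarrow> real) \<Rightarrow> bool" where
  "c_periodic f \<longleftrightarrow> (\<exists>p\<ge>1. (f ^^ p) 0 = 0)"

definition c_period :: "(real \<Rightarrow> real) \<Rightarrow> nat" where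
  "c_period f = (LEAST p. p \<ge> 1 \<and> (f ^^ p) 0 = 0)"

definition good :: "(real \<Rightarrow> real) \<Rightarrow> bool" where
  "good f \<longleftrightarrow> pw_expanding_unimodal f \<and>
     (\<not> c_periodic f \<or>
      (c_period f \<ge> 2 \<and>
       \<bar>Dfn f (c_period f - 1) (f 0)\<bar> * min \<bar>pD {0..1} 1 f 0\<bar> \<bar>pD {-1..0} 1 f 0\<bar> > 2))"

definition J :: "(real \<Rightarrow> real) \<Rightarrow> (real \<Rightarrow> real) \<Rightarrow> real" where
  "J f v = (if c_periodic f
            then (\<Sum>i<c_period f. v ((f ^^ i) 0) / Dfn f i (f 0))
            else (\<Sum>i. v ((f ^^ i) 0) / Dfn f i (f 0)))"

end

theory Submission
  imports Defs
begin


lemma pD1: "pD Q 1 g = (\<lambda>x. vector_derivative g (at x within Q))" by simp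

lemma Ck1_deriv: "Ck_on 1 Q g \<Longrightarrow> x \<in> Q \<Longrightarrow> (g has_real_derivative pD Q 1 g x) (at x within Q)"
  unfolding Ck_on_def by (metis One_nat_def less_one pD.simps(1))

lemma Ck_cont: "Ck_on k Q g \<Longrightarrow> continuous_on Q (pD Q k g)"
  unfolding Ck_on_def by blast

lemma pw_props:
  assumes "pw_expanding_unimodal g"
  shows "continuous_on {-1..1} g" "Ck_on 1 {-1..0} g" "Ck_on 1 {0..1} g"
        "g (-1) = -1" "g 1 = -1" "g 0 \<le> 1"
        "(INF x\<in>{-1..0}. pD {-1..0} 1 g x) > 1" "(SUP x\<in>{0..1}. pD {0..1} 1 g x) < -1"
  using assms unfolding pw_expanding_unimodal_def Bk_def by auto

lemma cont_bdd:
  fixes h :: "real \<Rightarrow> real"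
  assumes "continuous_on {a..b} h"
  shows "bdd_above (h ` {a..b})" "bdd_below (h ` {a..b})"
  using assms compact_continuous_image[OF assms] compact_Icc
  by (auto intro: bounded_imp_bdd_above bounded_imp_bdd_below compact_imp_bounded)

lemma pw_deriv_L:
  assumes "pw_expanding_unimodal g" "x \<in> {-1..0}"
  shows "pD {-1..0} 1 g x \<ge> (INF x\<in>{-1..0}. pD {-1..0} 1 g x)"
  using cont_bdd(2)[OF Ck_cont[OF pw_props(2)[OF assms(1)]]] assms(2)
  by (intro cINF_lower) auto

lemma pw_deriv_R:
  assumes "pw_expanding_unimodal g" "x \<in> {0..1}"
  shows "pD {0..1} 1 g x \<le> (SUP x\<in>{0..1}. pD {0..1} 1 g x)"
  using cont_bdd(1)[OF Ck_cont[OF pw_props(3)[OF assms(1)]]] assms(2)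
  by (intro cSUP_upper) auto

lemma pw_expand:
  assumes "pw_expanding_unimodal g"
  obtains lam where "lam > 1" "\<And>x. x \<in> {-1..1} \<Longrightarrow> \<bar>Df g x\<bar> \<ge> lam"
proof -
  define a where "a = (INF x\<in>{-1..0}. pD {-1..0} 1 g x)"
  define b where "b = (SUP x\<in>{0..1}. pD {0..1} 1 g x)"
  have a: "a > 1" and b: "b < -1" using pw_props[OF assms] a_def b_def by auto
  show ?thesis
  proof (rule that[of "min a (-b)"])
    show "1 < min a (- b)" using a b by auto
    fix x :: real assume x: "x \<in> {-1..1}"
    show "min a (-b) \<le> \<bar>Df g x\<bar>"
    proof (cases "x \<le> 0")
      case True
      then have "pD {-1..0} 1 g x \<ge> a" using pw_deriv_L[OF assms] x a_def by auto
      then show ?thesis using True a unfolding Df_def by auto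
    next
      case False
      then have "pD {0..1} 1 g x \<le> b" using pw_deriv_R[OF assms] x b_def by auto
      then show ?thesis using False b unfolding Df_def by auto
    qed
  qed
qed

lemma pw_maps:
  assumes "pw_expanding_unimodal g" "x \<in> {-1..1}"
  shows "g x \<in> {-1..1}"
proof -
  note P = pw_props[OF assms(1)]
  have dL: "\<exists>y. DERIV g z :> y \<and> y \<ge> 0" if "-1 < z" "z < 0" for z
  proof -
    have "(g has_real_derivative pD {-1..0} 1 g z) (at z within {-1..0})"
      using Ck1_deriv[OF P(2)] that by auto
    then have "DERIV g z :> pD {-1..0} 1 g z" using at_within_Icc_at[OF that] by simp
    moreover have "pD {-1..0} 1 g z \<ge> 0" using pw_deriv_L[OF assms(1), of z] P(7) that by force
    ultimately show ?thesis by blast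
  qed
  have dR: "\<exists>y. DERIV g z :> y \<and> y \<le> 0" if "0 < z" "z < 1" for z
  proof -
    have "(g has_real_derivative pD {0..1} 1 g z) (at z within {0..1})"
      using Ck1_deriv[OF P(3)] that by auto
    then have "DERIV g z :> pD {0..1} 1 g z" using at_within_Icc_at[OF that] by simp
    moreover have "pD {0..1} 1 g z \<le> 0" using pw_deriv_R[OF assms(1), of z] P(8) that by force
    ultimately show ?thesis by blast
  qed
  have c: "continuous_on {a..b} g" if "-1 \<le> a" "b \<le> 1" for a b
    using continuous_on_subset[OF P(1)] that by auto
  show ?thesis
  proof (cases "x \<le> 0")
    case True
    have "g (-1) \<le> g x" using DERIV_nonneg_imp_increasing_open[of "-1" x g] dL c True assms(2) by auto
    moreover have "g x \<le> g 0" using DERIV_nonneg_imp_increasing_open[of x 0 g] dL c True assms(2) by auto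
    ultimately show ?thesis using P by auto
  next
    case False
    have "g 1 \<le> g x" using DERIV_nonpos_imp_decreasing_open[of x 1 g] dR c False assms(2) by auto
    moreover have "g x \<le> g 0" using DERIV_nonpos_imp_decreasing_open[of 0 x g] dR c False assms(2) by auto
    ultimately show ?thesis using P by auto
  qed
qed

lemma pw_orbit:
  assumes "pw_expanding_unimodal g" "x \<in> {-1..1}"
  shows "(g ^^ i) x \<in> {-1..1}"
proof (induction i)
  case 0 then show ?case using assms(2) by simp
next
  case (Suc i) then show ?case using pw_maps[OF assms(1)] by simp
qed

definition orb :: "(real \<Rightarrow> real) \<Rightarrow> nat \<Rightarrow> real" where
  "orb g i = (g ^^ i) 0"

definition tm :: "(real \<Rightarrow> real) \<Rightarrow> (real \<Rightarrow> real) \<Rightarrow> nat \<Rightarrow> real" where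
  "tm g w i = w (orb g i) / Dfn g i (g 0)"

lemma Dfn_orb: "Dfn g i (g 0) = (\<Prod>j<i. Df g (orb g (Suc j)))"
  unfolding Dfn_def orb_def by (simp add: funpow_Suc_right del: funpow.simps)

lemma prod_split_add: "(\<Prod>j<a+(b::nat). h j) = (\<Prod>j<a. h j) * (\<Prod>j<b. (h (a+j)::real))"
  by (induction b) (auto simp: mult.assoc)

lemma Dfn_split: "Dfn g (a+b) (g 0) = Dfn g a (g 0) * (\<Prod>j<b. Df g (orb g (Suc (a+j))))"
  unfolding Dfn_orb prod_split_add by simp

lemma prod_abs_ge:
  assumes "\<And>j. j < k \<Longrightarrow> \<bar>h j\<bar> \<ge> lam" "lam \<ge> 0"
  shows "\<bar>(\<Prod>j<k. (h j::real))\<bar> \<ge> lam ^ k"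
proof -
  have "lam ^ k = (\<Prod>j<k. lam)" by simp
  also have "\<dots> \<le> (\<Prod>j<k. \<bar>h j\<bar>)" by (rule prod_mono) (use assms in auto)
  finally show ?thesis by (simp add: abs_prod)
qed

locale tailsetup =
  fixes g w :: "real \<Rightarrow> real" and lam W :: real
  assumes lam: "lam > 1" and dfb: "\<And>x. x \<in> {-1..1} \<Longrightarrow> \<bar>Df g x\<bar> \<ge> lam"
    and orbI: "\<And>i. orb g i \<in> {-1..1}" and wb: "\<And>x. x \<in> {-1..1} \<Longrightarrow> \<bar>w x\<bar> \<le> W"
begin

lemma Dfn_ge: "\<bar>Dfn g (K+k) (g 0)\<bar> \<ge> \<bar>Dfn g K (g 0)\<bar> * lam ^ k"
proof -
  have "\<bar>(\<Prod>j<k. Df g (orb g (Suc (K+j))))\<bar> \<ge> lam ^ k"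
    using dfb orbI lam by (intro prod_abs_ge) auto
  then show ?thesis unfolding Dfn_split abs_mult
    by (intro mult_left_mono) auto
qed

lemma Dfn_ge0: "\<bar>Dfn g k (g 0)\<bar> \<ge> lam ^ k"
  using Dfn_ge[of 0 k] by (simp add: Dfn_def)

lemma Dfn_pos: "\<bar>Dfn g k (g 0)\<bar> > 0"
  using Dfn_ge0[of k] lam by (meson less_le_trans zero_less_one less_trans zero_less_power)

lemma W0: "W \<ge> 0" using wb[of 0] by auto

lemma tm_bound: "\<bar>tm g w (K+k)\<bar> \<le> W / \<bar>Dfn g K (g 0)\<bar> * (1/lam) ^ k"
proof -
  have D: "\<bar>Dfn g K (g 0)\<bar> > 0" by (rule Dfn_pos)
  have "\<bar>tm g w (K+k)\<bar> = \<bar>w (orb g (K+k))\<bar> / \<bar>Dfn g (K+k) (g 0)\<bar>"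
    unfolding tm_def by (simp add: abs_divide)
  also have "\<dots> \<le> W / (\<bar>Dfn g K (g 0)\<bar> * lam ^ k)"
    using wb[OF orbI] Dfn_ge[of K k] D lam W0
    by (intro frac_le) auto
  also have "\<dots> = W / \<bar>Dfn g K (g 0)\<bar> * (1/lam) ^ k"
    by (simp add: power_one_over field_simps)
  finally show ?thesis .
qed

lemma tm_bound': "\<bar>tm g w (k+K)\<bar> \<le> W / \<bar>Dfn g K (g 0)\<bar> * (1/lam) ^ k"
  by (metis add.commute tm_bound)

definition BB where "BB K = W * lam / ((lam - 1) * \<bar>Dfn g K (g 0)\<bar>)"

lemma geo: "summable (\<lambda>k. W / \<bar>Dfn g K (g 0)\<bar> * (1/lam) ^ k)"
  "(\<Sum>k. W / \<bar>Dfn g K (g 0)\<bar> * (1/lam) ^ k) = BB K"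
proof -
  have s: "summable (\<lambda>k. (1/lam) ^ k)" using lam by (intro summable_geometric) auto
  then show "summable (\<lambda>k. W / \<bar>Dfn g K (g 0)\<bar> * (1/lam) ^ k)" by (rule summable_mult)
  have "(\<Sum>k. (1/lam) ^ k) = 1 / (1 - 1/lam)" using lam by (intro suminf_geometric) auto
  also have "\<dots> = lam / (lam - 1)" using lam by (simp add: field_simps)
  finally show "(\<Sum>k. W / \<bar>Dfn g K (g 0)\<bar> * (1/lam) ^ k) = BB K"
    unfolding BB_def using suminf_mult[OF s, of "W / \<bar>Dfn g K (g 0)\<bar>"] by simp
qed

lemma summ_shift: "summable (\<lambda>k. tm g w (k + K))"
  by (rule summable_rabs_cancel, rule summable_comparison_test'[OF geo(1)[of K]])
     (use tm_bound' in auto)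

lemma summ: "summable (tm g w)"
  using summ_shift[of 0] by simp

lemma tail_inf: "\<bar>suminf (tm g w) - (\<Sum>i<K. tm g w i)\<bar> \<le> BB K"
proof -
  have "suminf (tm g w) = (\<Sum>k. tm g w (k + K)) + (\<Sum>i<K. tm g w i)"
    by (rule suminf_split_initial_segment[OF summ])
  then have "\<bar>suminf (tm g w) - (\<Sum>i<K. tm g w i)\<bar> = \<bar>\<Sum>k. tm g w (k + K)\<bar>" by simp
  also have "\<dots> \<le> (\<Sum>k. \<bar>tm g w (k + K)\<bar>)"
    by (rule summable_rabs) (rule summable_comparison_test'[OF geo(1)[of K]], use tm_bound' in auto)
  also have "\<dots> \<le> (\<Sum>k. W / \<bar>Dfn g K (g 0)\<bar> * (1/lam) ^ k)"
  proof (rule suminf_le)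
    show "summable (\<lambda>k. \<bar>tm g w (k + K)\<bar>)"
      by (rule summable_comparison_test'[OF geo(1)[of K]]) (use tm_bound' in auto)
  qed (use tm_bound' geo(1) in auto)
  finally show ?thesis using geo(2) by simp
qed

lemma tail_fin: assumes "K \<le> N" shows "\<bar>(\<Sum>i<N. tm g w i) - (\<Sum>i<K. tm g w i)\<bar> \<le> BB K"
proof -
  obtain d where N: "N = K + d" using assms le_Suc_ex by blast
  have "(\<Sum>i<N. tm g w i) - (\<Sum>i<K. tm g w i) = (\<Sum>k<d. tm g w (K + k))"
    unfolding N by (induction d) auto
  also have "\<bar>\<dots>\<bar> \<le> (\<Sum>k<d. \<bar>tm g w (K + k)\<bar>)" by (rule sum_abs)
  also have "\<dots> \<le> (\<Sum>k<d. W / \<bar>Dfn g K (g 0)\<bar> * (1/lam) ^ k)"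
    by (rule sum_mono) (rule tm_bound)
  also have "\<dots> \<le> (\<Sum>k. W / \<bar>Dfn g K (g 0)\<bar> * (1/lam) ^ k)"
    by (rule sum_le_suminf[OF geo(1)]) (use W0 lam in auto)
  finally show ?thesis using geo(2) by simp
qed

lemma c_period_props:
  assumes "c_periodic h"
  shows "c_period h \<ge> 1" "orb h (c_period h) = 0"
    "\<And>i. 1 \<le> i \<Longrightarrow> i < c_period h \<Longrightarrow> orb h i \<noteq> 0"
proof -
  have ex: "\<exists>p. p \<ge> 1 \<and> (h ^^ p) 0 = 0" using assms unfolding c_periodic_def by auto
  show "c_period h \<ge> 1" "orb h (c_period h) = 0"
    using LeastI_ex[OF ex] unfolding c_period_def orb_def by auto
  show "\<And>i. 1 \<le> i \<Longrightarrow> i < c_period h \<Longrightarrow> orb h i \<noteq> 0"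
    using not_less_Least unfolding c_period_def orb_def by blast
qed

lemma J_tail:
  assumes "\<not> c_periodic g \<or> c_period g \<ge> K"
  shows "\<bar>J g w - (\<Sum>i<K. tm g w i)\<bar> \<le> BB K"
proof -
  have "J g w = (if c_periodic g then sum (tm g w) {..<c_period g} else suminf (tm g w))"
    unfolding J_def tm_def orb_def by simp
  then show ?thesis using assms tail_inf tail_fin by auto
qed

end




definition Eb :: "(real \<Rightarrow> real) \<Rightarrow> nat \<Rightarrow> nat \<Rightarrow> real" where
  "Eb g p m = Dfn g (m*p) (g 0)"

definition bt :: "(real \<Rightarrow> real) \<Rightarrow> (real \<Rightarrow> real) \<Rightarrow> nat \<Rightarrow> nat \<Rightarrow> real" where
  "bt g w p m = (\<Sum>r<p. w (orb g (m*p+r)) / (\<Prod>j<r. Df g (orb g (Suc (m*p+j)))))"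

lemma sum_shift_ivl: "sum h {a..<a+(p::nat)} = (\<Sum>r<p. (h (a+r)::real))"
  by (induction p) auto

lemma block_decomp: "(\<Sum>i<M*p. tm g w i) = (\<Sum>m<M. bt g w p m / Eb g p m)"
proof -
  have "(\<Sum>i<M*p. tm g w i) = (\<Sum>m<M. sum (tm g w) {m*p..<m*p+p})"
    by (rule sum.nat_group[symmetric])
  also have "\<dots> = (\<Sum>m<M. bt g w p m / Eb g p m)"
  proof (rule sum.cong[OF refl])
    fix m
    have "sum (tm g w) {m*p..<m*p+p} = (\<Sum>r<p. tm g w (m*p+r))" by (rule sum_shift_ivl)
    also have "\<dots> = (\<Sum>r<p. w (orb g (m*p+r)) / (\<Prod>j<r. Df g (orb g (Suc (m*p+j))))) / Eb g p m"
      unfolding sum_divide_distrib tm_def Eb_def Dfn_split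
      by (intro sum.cong refl) (simp add: mult.commute)
    finally show "sum (tm g w) {m*p..<m*p+p} = bt g w p m / Eb g p m" unfolding bt_def .
  qed
  finally show ?thesis .
qed

lemma Eb_0: "Eb g p 0 = 1" unfolding Eb_def Dfn_def by simp

lemma Eb_Suc:
  assumes "p = Suc q"
  shows "Eb g p (Suc m) = Eb g p m * ((\<Prod>r<q. Df g (orb g (Suc (m*p+r)))) * Df g (orb g (Suc m * p)))"
proof -
  have "Eb g p (Suc m) = Dfn g (m*p + p) (g 0)" unfolding Eb_def by (simp add: add.commute)
  also have "\<dots> = Eb g p m * (\<Prod>r<p. Df g (orb g (Suc (m*p+r))))" unfolding Dfn_split Eb_def ..
  also have "(\<Prod>r<p. Df g (orb g (Suc (m*p+r)))) = (\<Prod>r<q. Df g (orb g (Suc (m*p+r)))) * Df g (orb g (Suc m * p))"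
  proof -
    have e: "Suc m * p = Suc (m*p + q)" using assms by simp
    show ?thesis unfolding e using assms by simp
  qed
  finally show ?thesis .
qed

lemma orb_Suc: "orb g (Suc i) = g (orb g i)" unfolding orb_def by simp

lemma orb_period:
  assumes "orb g p = 0"
  shows "orb g (m*p + r) = orb g r"
proof -
  have z: "(g ^^ (m*p)) 0 = 0"
  proof (induction m)
    case (Suc m)
    have "(g ^^ (Suc m * p)) 0 = (g ^^ p) ((g ^^ (m*p)) 0)" by (simp add: funpow_add)
    then show ?case using Suc assms unfolding orb_def by simp
  qed simp
  have "(g ^^ (m*p + r)) 0 = (g ^^ r) ((g ^^ (m*p)) 0)" by (simp add: funpow_add add.commute)
  then show ?thesis using z unfolding orb_def by simp
qed

lemma bt_0: "bt g w p 0 = (\<Sum>r<p. tm g w r)"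
  unfolding bt_def tm_def Dfn_orb by simp

lemma bt_period: "orb g p = 0 \<Longrightarrow> bt g w p m = bt g w p 0"
  unfolding bt_def using orb_period[of g p m] by (simp add: add_Suc_right[symmetric] del: add_Suc_right)

lemma Cnorm_ge:
  fixes h :: "real \<Rightarrow> real"
  assumes "continuous_on {a..b} (pD {a..b} i h)" "i \<le> k" "x \<in> {a..b}"
  shows "\<bar>pD {a..b} i h x\<bar> \<le> Cnorm k {a..b} h"
proof -
  have c: "continuous_on {a..b} (\<lambda>x. \<bar>pD {a..b} i h x\<bar>)" using assms(1) by (intro continuous_intros)
  have "\<bar>pD {a..b} i h x\<bar> \<le> (SUP x\<in>{a..b}. \<bar>pD {a..b} i h x\<bar>)"
    by (rule cSUP_upper[OF assms(3) cont_bdd(1)[OF c]])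
  also have "\<dots> \<le> Cnorm k {a..b} h" unfolding Cnorm_def
    by (rule Max_ge) (use assms(2) in auto)
  finally show ?thesis .
qed

lemma pD1_diff:
  assumes "Ck_on 1 {a..b} g1" "Ck_on 1 {a..b} g2" "a < b" "x \<in> {a..b}"
  shows "pD {a..b} 1 (\<lambda>x. g1 x - g2 x) x = pD {a..b} 1 g1 x - pD {a..b} 1 g2 x"
proof -
  have "((\<lambda>x. g1 x - g2 x) has_real_derivative pD {a..b} 1 g1 x - pD {a..b} 1 g2 x) (at x within {a..b})"
    using Ck1_deriv[OF assms(1,4)] Ck1_deriv[OF assms(2,4)] by (intro derivative_intros)
  then have "((\<lambda>x. g1 x - g2 x) has_vector_derivative pD {a..b} 1 g1 x - pD {a..b} 1 g2 x) (at x within {a..b})"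
    by (simp add: has_real_derivative_iff_has_vector_derivative)
  from vector_derivative_within_closed_interval[OF assms(3,4) this] show ?thesis by simp
qed

lemma Bnorm0_ge:
  assumes "Bk 0 g1" "Bk 0 g2" "x \<in> {-1..1}"
  shows "\<bar>g1 x - g2 x\<bar> \<le> Bnorm 0 (\<lambda>x. g1 x - g2 x)"
proof -
  let ?h = "\<lambda>x. g1 x - g2 x"
  have c0: "continuous_on {a..b} (pD {a..b} 0 ?h)" if "-1 \<le> a" "b \<le> 1" for a b
    using continuous_on_subset[of "{-1..1}" g1] continuous_on_subset[of "{-1..1}" g2] assms that
    unfolding Bk_def by (auto intro!: continuous_intros)
  show ?thesis
  proof (cases "x \<le> 0")
    case True
    then have "\<bar>pD {-1..0} 0 ?h x\<bar> \<le> Cnorm 0 {-1..0} ?h" using assms(3) by (intro Cnorm_ge c0) auto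
    then show ?thesis unfolding Bnorm_def by simp
  next
    case False
    then have "\<bar>pD {0..1} 0 ?h x\<bar> \<le> Cnorm 0 {0..1} ?h" using assms(3) by (intro Cnorm_ge c0) auto
    then show ?thesis unfolding Bnorm_def by simp
  qed
qed

lemma Bnorm1_ge:
  assumes "pw_expanding_unimodal g1" "pw_expanding_unimodal g2" "x \<in> {-1..1}"
  shows "\<bar>g1 x - g2 x\<bar> \<le> Bnorm 1 (\<lambda>x. g1 x - g2 x)"
    "\<bar>Df g1 x - Df g2 x\<bar> \<le> Bnorm 1 (\<lambda>x. g1 x - g2 x)"
proof -
  note P1 = pw_props[OF assms(1)] and P2 = pw_props[OF assms(2)]
  let ?h = "\<lambda>x. g1 x - g2 x"
  have c0: "continuous_on {a..b} (pD {a..b} 0 ?h)" if "-1 \<le> a" "b \<le> 1" for a b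
  proof -
    have "continuous_on {a..b} g1" by (rule continuous_on_subset[OF P1(1)]) (use that in auto)
    moreover have "continuous_on {a..b} g2" by (rule continuous_on_subset[OF P2(1)]) (use that in auto)
    ultimately have "continuous_on {a..b} ?h" by (rule continuous_on_diff)
    then show ?thesis by simp
  qed
  have c1: "continuous_on {a..b} (pD {a..b} 1 ?h)" if "Ck_on 1 {a..b} g1" "Ck_on 1 {a..b} g2" "a < b" for a b
  proof -
    have "continuous_on {a..b} (\<lambda>x. pD {a..b} 1 g1 x - pD {a..b} 1 g2 x)"
      using Ck_cont[OF that(1)] Ck_cont[OF that(2)] by (intro continuous_intros)
    then show ?thesis by (rule continuous_on_eq) (use pD1_diff[OF that] in auto)
  qed
  show "\<bar>g1 x - g2 x\<bar> \<le> Bnorm 1 ?h"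
  proof (cases "x \<le> 0")
    case True
    then have "\<bar>pD {-1..0} 0 ?h x\<bar> \<le> Cnorm 1 {-1..0} ?h" using assms(3) by (intro Cnorm_ge c0) auto
    then show ?thesis unfolding Bnorm_def by simp
  next
    case False
    then have "\<bar>pD {0..1} 0 ?h x\<bar> \<le> Cnorm 1 {0..1} ?h" using assms(3) by (intro Cnorm_ge c0) auto
    then show ?thesis unfolding Bnorm_def by simp
  qed
  show "\<bar>Df g1 x - Df g2 x\<bar> \<le> Bnorm 1 ?h"
  proof (cases "x \<le> 0")
    case True
    have "\<bar>pD {-1..0} 1 ?h x\<bar> \<le> Cnorm 1 {-1..0} ?h" using assms(3) True
      by (intro Cnorm_ge c1[OF P1(2) P2(2)]) auto
    moreover have "pD {-1..0} 1 ?h x = pD {-1..0} 1 g1 x - pD {-1..0} 1 g2 x"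
      using pD1_diff[OF P1(2) P2(2), of x] assms(3) True by auto
    ultimately show ?thesis unfolding Bnorm_def Df_def using True by auto
  next
    case False
    have "\<bar>pD {0..1} 1 ?h x\<bar> \<le> Cnorm 1 {0..1} ?h" using assms(3) False
      by (intro Cnorm_ge c1[OF P1(3) P2(3)]) auto
    moreover have "pD {0..1} 1 ?h x = pD {0..1} 1 g1 x - pD {0..1} 1 g2 x"
      using pD1_diff[OF P1(3) P2(3), of x] assms(3) False by auto
    ultimately show ?thesis unfolding Bnorm_def Df_def using False by auto
  qed
qed





lemma orbI: "pw_expanding_unimodal g \<Longrightarrow> orb g i \<in> {-1..1}"
  unfolding orb_def by (rule pw_orbit) auto

locale ms =
  fixes f :: "real \<Rightarrow> real" and fs :: "nat \<Rightarrow> real \<Rightarrow> real"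
    and v :: "real \<Rightarrow> real" and vs :: "nat \<Rightarrow> real \<Rightarrow> real"
  assumes pf: "pw_expanding_unimodal f" and pfs: "\<And>n. pw_expanding_unimodal (fs n)"
    and c1: "(\<lambda>n. Bnorm 1 (\<lambda>x. fs n x - f x)) \<longlonglongrightarrow> 0"
    and bv: "Bk 0 v" and bvs: "\<And>n. Bk 0 (vs n)"
    and c0: "(\<lambda>n. Bnorm 0 (\<lambda>x. vs n x - v x)) \<longlonglongrightarrow> 0"
begin

lemma fs_conv:
  assumes y: "y \<longlonglongrightarrow> y0" "\<And>n. y n \<in> {-1..1}" "y0 \<in> {-1..1}"
  shows "(\<lambda>n. fs n (y n)) \<longlonglongrightarrow> f y0"
proof -
  have "(\<lambda>n. f (y n)) \<longlonglongrightarrow> f y0"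
    using continuous_on_tendsto_compose[OF pw_props(1)[OF pf] y(1) y(3)] y(2) by auto
  moreover have "(\<lambda>n. fs n (y n) - f (y n)) \<longlonglongrightarrow> 0"
    by (rule Lim_null_comparison[OF _ c1]) (use Bnorm1_ge(1)[OF pfs pf y(2)] in \<open>intro always_eventually allI, simp\<close>)
  ultimately have "(\<lambda>n. (fs n (y n) - f (y n)) + f (y n)) \<longlonglongrightarrow> 0 + f y0" by (intro tendsto_add)
  then show ?thesis by simp
qed

lemma vs_conv:
  assumes y: "y \<longlonglongrightarrow> y0" "\<And>n. y n \<in> {-1..1}" "y0 \<in> {-1..1}"
  shows "(\<lambda>n. vs n (y n)) \<longlonglongrightarrow> v y0"
proof -
  have "(\<lambda>n. v (y n)) \<longlonglongrightarrow> v y0"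
    using continuous_on_tendsto_compose[OF _ y(1) y(3)] bv y(2) unfolding Bk_def by auto
  moreover have "(\<lambda>n. vs n (y n) - v (y n)) \<longlonglongrightarrow> 0"
    by (rule Lim_null_comparison[OF _ c0]) (use Bnorm0_ge[OF bvs bv y(2)] in \<open>intro always_eventually allI, simp\<close>)
  ultimately have "(\<lambda>n. (vs n (y n) - v (y n)) + v (y n)) \<longlonglongrightarrow> 0 + v y0" by (intro tendsto_add)
  then show ?thesis by simp
qed

lemma orb_conv: "(\<lambda>n. orb (fs n) i) \<longlonglongrightarrow> orb f i"
proof (induction i)
  case 0 then show ?case unfolding orb_def by simp
next
  case (Suc i)
  show ?case unfolding orb_Suc
    by (rule fs_conv[OF Suc]) (use orbI pfs pf in auto)
qed

lemma Df_f_cont: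
  assumes y: "y \<longlonglongrightarrow> y0" "\<And>n. y n \<in> {-1..1}" "y0 \<in> {-1..1}" "y0 \<noteq> 0"
  shows "(\<lambda>n. Df f (y n)) \<longlonglongrightarrow> Df f y0"
proof (cases "y0 < 0")
  case True
  have ev: "eventually (\<lambda>n. y n < 0) sequentially" using order_tendstoD(2)[OF y(1) True] .
  have "(\<lambda>n. pD {-1..0} 1 f (y n)) \<longlonglongrightarrow> pD {-1..0} 1 f y0"
    using continuous_on_tendsto_compose[OF Ck_cont[OF pw_props(2)[OF pf]] y(1)] True y(2,3)
      eventually_mono[OF ev, of "\<lambda>n. y n \<in> {-1..0}"] by fastforce
  moreover have "eventually (\<lambda>n. Df f (y n) = pD {-1..0} 1 f (y n)) sequentially"
    using ev by eventually_elim (auto simp: Df_def)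
  moreover have "Df f y0 = pD {-1..0} 1 f y0" using True unfolding Df_def by simp
  ultimately show ?thesis using tendsto_cong[of "\<lambda>n. Df f (y n)" "\<lambda>n. pD {-1..0} 1 f (y n)"] by simp
next
  case False
  then have F: "y0 > 0" using y(4) by auto
  have ev: "eventually (\<lambda>n. y n > 0) sequentially" using order_tendstoD(1)[OF y(1) F] .
  have "(\<lambda>n. pD {0..1} 1 f (y n)) \<longlonglongrightarrow> pD {0..1} 1 f y0"
    using continuous_on_tendsto_compose[OF Ck_cont[OF pw_props(3)[OF pf]] y(1)] F y(2,3)
      eventually_mono[OF ev, of "\<lambda>n. y n \<in> {0..1}"] by fastforce
  moreover have "eventually (\<lambda>n. Df f (y n) = pD {0..1} 1 f (y n)) sequentially"
    using ev by eventually_elim (auto simp: Df_def)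
  moreover have "Df f y0 = pD {0..1} 1 f y0" using F unfolding Df_def by simp
  ultimately show ?thesis using tendsto_cong[of "\<lambda>n. Df f (y n)" "\<lambda>n. pD {0..1} 1 f (y n)"] by simp
qed

lemma Df_conv:
  assumes y: "y \<longlonglongrightarrow> y0" "\<And>n. y n \<in> {-1..1}" "y0 \<in> {-1..1}" "y0 \<noteq> 0"
  shows "(\<lambda>n. Df (fs n) (y n)) \<longlonglongrightarrow> Df f y0"
proof -
  have "(\<lambda>n. Df (fs n) (y n) - Df f (y n)) \<longlonglongrightarrow> 0"
    by (rule Lim_null_comparison[OF _ c1]) (use Bnorm1_ge(2)[OF pfs pf y(2)] in \<open>intro always_eventually allI, simp\<close>)
  then have "(\<lambda>n. (Df (fs n) (y n) - Df f (y n)) + Df f (y n)) \<longlonglongrightarrow> 0 + Df f y0"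
    by (intro tendsto_add Df_f_cont[OF y])
  then show ?thesis by simp
qed

lemma Df_near0:
  assumes y: "y \<longlonglongrightarrow> 0" "\<And>n. y n \<in> {-1..1}" and e: "e > 0"
  shows "eventually (\<lambda>n. \<bar>Df (fs n) (y n)\<bar> \<ge> min \<bar>pD {0..1} 1 f 0\<bar> \<bar>pD {-1..0} 1 f 0\<bar> - e) sequentially"
proof -
  have ym: "(\<lambda>n. min (y n) 0) \<longlonglongrightarrow> 0" using tendsto_min[OF y(1) tendsto_const[of 0]] by simp
  have yM: "(\<lambda>n. max (y n) 0) \<longlonglongrightarrow> 0" using tendsto_max[OF y(1) tendsto_const[of 0]] by simp
  have a: "(\<lambda>n. pD {-1..0} 1 f (min (y n) 0)) \<longlonglongrightarrow> pD {-1..0} 1 f 0"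
    using continuous_on_tendsto_compose[OF Ck_cont[OF pw_props(2)[OF pf]] ym] y(2) by fastforce
  have b: "(\<lambda>n. pD {0..1} 1 f (max (y n) 0)) \<longlonglongrightarrow> pD {0..1} 1 f 0"
    using continuous_on_tendsto_compose[OF Ck_cont[OF pw_props(3)[OF pf]] yM] y(2) by fastforce
  have e2: "e/2 > 0" using e by simp
  have ea: "eventually (\<lambda>n. \<bar>pD {-1..0} 1 f (min (y n) 0) - pD {-1..0} 1 f 0\<bar> < e/2) sequentially"
    using tendstoD[OF a e2] by (simp add: dist_real_def)
  have eb: "eventually (\<lambda>n. \<bar>pD {0..1} 1 f (max (y n) 0) - pD {0..1} 1 f 0\<bar> < e/2) sequentially"
    using tendstoD[OF b e2] by (simp add: dist_real_def)
  have ec: "eventually (\<lambda>n. Bnorm 1 (\<lambda>x. fs n x - f x) < e/2) sequentially"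
    using order_tendstoD(2)[OF c1 e2] .
  show ?thesis using ea eb ec
  proof eventually_elim
    case (elim n)
    have d: "\<bar>Df (fs n) (y n) - Df f (y n)\<bar> < e/2" using Bnorm1_ge(2)[OF pfs[of n] pf y(2)[of n]] elim(3) by linarith
    show ?case
    proof (cases "y n \<le> 0")
      case True
      then have "Df f (y n) = pD {-1..0} 1 f (min (y n) 0)" unfolding Df_def by (simp add: min_def)
      then show ?thesis using d elim(1) by (auto simp: min_def abs_if split: if_splits)
    next
      case False
      then have "Df f (y n) = pD {0..1} 1 f (max (y n) 0)" unfolding Df_def by (simp add: max_def)
      then show ?thesis using d elim(2) by (auto simp: min_def abs_if split: if_splits)
    qed
  qed
qed

end



lemma prod_ge_lemma:
  fixes a b r x y :: real
  assumes "a > 0" "b > 0" "a * b > r"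
    and "x \<ge> a - min (min a b) ((a*b - r)/(a+b))" "y \<ge> b - min (min a b) ((a*b - r)/(a+b))"
  shows "x * y \<ge> r"
proof -
  define e where "e = min (min a b) ((a*b - r)/(a+b))"
  have e1: "e \<le> a" "e \<le> b" unfolding e_def by auto
  have "e \<le> (a*b - r)/(a+b)" unfolding e_def by auto
  then have e2: "e * (a+b) \<le> a*b - r" using assms(1,2) by (simp add: pos_le_divide_eq)
  have "(a - e) * (b - e) \<le> x * y"
    using assms(4,5) e1 unfolding e_def[symmetric] by (intro mult_mono) auto
  moreover have "(a - e) * (b - e) = a*b - e*(a+b) + e*e" by (simp add: algebra_simps)
  moreover have "e * e \<ge> 0" by simp
  ultimately show ?thesis using e2 by linarith
qed

lemma sigma_lemma:
  fixes e :: "nat \<Rightarrow> real" and rho :: real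
  assumes rho: "rho > 2" and M: "M \<ge> 1" and e0: "e 0 = 1"
    and eb: "\<And>m. m < M \<Longrightarrow> \<bar>e m\<bar> \<ge> rho ^ m"
  shows "\<bar>\<Sum>m<M. 1 / e m\<bar> \<ge> (rho - 2) / (rho - 1)"
proof -
  obtain k where Mk: "M = Suc k" using M by (cases M) auto
  have split: "(\<Sum>m<M. 1 / e m) = 1 + (\<Sum>m<k. 1 / e (Suc m))"
    unfolding Mk sum.lessThan_Suc_shift using e0 by simp
  have x: "1/rho < 1" "1/rho > 0" using rho by auto
  have "\<bar>\<Sum>m<k. 1 / e (Suc m)\<bar> \<le> (\<Sum>m<k. \<bar>1 / e (Suc m)\<bar>)" by (rule sum_abs)
  also have "\<dots> \<le> (\<Sum>m<k. (1/rho) ^ Suc m)"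
  proof (rule sum_mono)
    fix m assume "m \<in> {..<k}"
    then have "Suc m < M" using Mk by simp
    then have "\<bar>e (Suc m)\<bar> \<ge> rho ^ Suc m" by (rule eb)
    moreover have "rho ^ Suc m > 0" using rho by simp
    ultimately show "\<bar>1 / e (Suc m)\<bar> \<le> (1/rho) ^ Suc m"
      by (simp add: power_one_over abs_divide frac_le)
  qed
  also have "\<dots> = (1/rho) * (\<Sum>m<k. (1/rho) ^ m)" by (simp add: sum_distrib_left)
  also have "\<dots> = (1/rho) * ((1 - (1/rho)^k) / (1 - 1/rho))"
    using sum_gp_strict[of "1/rho" k] rho by simp
  also have "\<dots> \<le> (1/rho) * (1 / (1 - 1/rho))"
    using x by (intro mult_left_mono divide_right_mono) auto
  also have "\<dots> = 1 / (rho - 1)" using rho by (simp add: field_simps)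
  finally have b: "\<bar>\<Sum>m<k. 1 / e (Suc m)\<bar> \<le> 1 / (rho - 1)" .
  have "(rho - 2) / (rho - 1) = 1 - 1 / (rho - 1)" using rho by (simp add: field_simps)
  then show ?thesis unfolding split using b by linarith
qed




context ms begin

lemma unif:
  obtains lam W where "lam > 1" "tailsetup f v lam W"
    "eventually (\<lambda>n. tailsetup (fs n) (vs n) lam W) sequentially"
proof -
  obtain lf where lf: "lf > 1" "\<And>x. x \<in> {-1..1} \<Longrightarrow> \<bar>Df f x\<bar> \<ge> lf" using pw_expand[OF pf] by blast
  define lam where "lam = (1 + lf) / 2"
  have "compact (v ` {-1..1})" using bv unfolding Bk_def by (intro compact_continuous_image) auto
  then have "bounded (v ` {-1..1})" by (rule compact_imp_bounded)
  then obtain Wv where Wv0: "\<forall>y \<in> v ` {-1..1}. \<bar>y\<bar> \<le> Wv" unfolding bounded_real by blast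
  then have Wv: "\<And>x. x \<in> {-1..1} \<Longrightarrow> \<bar>v x\<bar> \<le> Wv" by blast
  define W where "W = Wv + 1"
  have l1: "lam > 1" using lf unfolding lam_def by simp
  show ?thesis
  proof (rule that[of lam W])
    show "lam > 1" by (rule l1)
    show "tailsetup f v lam W"
    proof (rule tailsetup.intro)
      fix x :: real assume x: "x \<in> {-1..1}"
      have "lam \<le> lf" using lf(1) unfolding lam_def by simp
      then show "lam \<le> \<bar>Df f x\<bar>" using lf(2)[OF x] by linarith
      show "\<bar>v x\<bar> \<le> W" using Wv[OF x] unfolding W_def by linarith
    qed (use l1 orbI[OF pf] in auto)
    have e1: "(lf - 1)/2 > 0" using lf by simp
    show "eventually (\<lambda>n. tailsetup (fs n) (vs n) lam W) sequentially"
      using order_tendstoD(2)[OF c1 e1] order_tendstoD(2)[OF c0 zero_less_one]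
    proof eventually_elim
      case (elim n)
      show ?case
      proof (rule tailsetup.intro)
        show "1 < lam" by (rule l1)
        fix x :: real assume x: "x \<in> {-1..1}"
        have "\<bar>Df (fs n) x - Df f x\<bar> < (lf - 1)/2" using Bnorm1_ge(2)[OF pfs[of n] pf x] elim by linarith
        moreover have "lam = lf - (lf - 1)/2" unfolding lam_def by (simp add: field_simps)
        ultimately show "lam \<le> \<bar>Df (fs n) x\<bar>" using lf(2)[OF x] by linarith
        have "\<bar>vs n x - v x\<bar> < 1" using Bnorm0_ge[OF bvs[of n] bv x] elim by linarith
        then show "\<bar>vs n x\<bar> \<le> W" using Wv[OF x] unfolding W_def by linarith
      next
        show "\<And>i. orb (fs n) i \<in> {-1..1}" by (rule orbI[OF pfs])
      qed
    qed
  qed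
qed

lemma Df_nz: "x \<in> {-1..1} \<Longrightarrow> Df f x \<noteq> 0"
proof -
  assume x: "x \<in> {-1..1}"
  obtain lam where "lam > 1" "\<And>x. x \<in> {-1..1} \<Longrightarrow> \<bar>Df f x\<bar> \<ge> lam" using pw_expand[OF pf] by blast
  then have "\<bar>Df f x\<bar> > 0" using x by fastforce
  then show ?thesis by auto
qed

lemma prodDf_conv:
  assumes "finite S" "\<And>j. j \<in> S \<Longrightarrow> orb f (h j) \<noteq> 0"
  shows "(\<lambda>n. \<Prod>j\<in>S. Df (fs n) (orb (fs n) (h j))) \<longlonglongrightarrow> (\<Prod>j\<in>S. Df f (orb f (h j)))"
    "(\<Prod>j\<in>S. Df f (orb f (h j))) \<noteq> 0"
proof -
  show "(\<lambda>n. \<Prod>j\<in>S. Df (fs n) (orb (fs n) (h j))) \<longlonglongrightarrow> (\<Prod>j\<in>S. Df f (orb f (h j)))"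
  proof (rule tendsto_prod)
    fix j assume j: "j \<in> S"
    show "(\<lambda>n. Df (fs n) (orb (fs n) (h j))) \<longlonglongrightarrow> Df f (orb f (h j))"
      by (rule Df_conv[OF orb_conv orbI[OF pfs] orbI[OF pf] assms(2)[OF j]])
  qed
  have "\<forall>j\<in>S. Df f (orb f (h j)) \<noteq> 0" using Df_nz orbI[OF pf] by blast
  then show "(\<Prod>j\<in>S. Df f (orb f (h j))) \<noteq> 0" using assms(1) by (simp add: prod_zero_iff)
qed

lemma vs_orb_conv: "(\<lambda>n. vs n (orb (fs n) i)) \<longlonglongrightarrow> v (orb f i)"
  by (rule vs_conv[OF orb_conv orbI[OF pfs] orbI[OF pf]])

lemma tm_conv:
  assumes "\<And>j. j < i \<Longrightarrow> orb f (Suc j) \<noteq> 0"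
  shows "(\<lambda>n. tm (fs n) (vs n) i) \<longlonglongrightarrow> tm f v i"
proof -
  note p = prodDf_conv[of "{..<i}" Suc]
  have a: "\<And>j. j \<in> {..<i} \<Longrightarrow> orb f (Suc j) \<noteq> 0" using assms by simp
  show ?thesis unfolding tm_def Dfn_orb
    by (rule tendsto_divide[OF vs_orb_conv p(1)[OF _ a] p(2)[OF _ a]]) simp_all
qed

lemma bt_conv:
  assumes "\<And>r j. r < p \<Longrightarrow> j < r \<Longrightarrow> orb f (Suc (m*p+j)) \<noteq> 0"
  shows "(\<lambda>n. bt (fs n) (vs n) p m) \<longlonglongrightarrow> bt f v p m"
  unfolding bt_def
proof (rule tendsto_sum)
  fix r assume r: "r \<in> {..<p}"
  note p = prodDf_conv[of "{..<r}" "\<lambda>j. Suc (m*p+j)"]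
  have a: "\<And>j. j \<in> {..<r} \<Longrightarrow> orb f (Suc (m*p+j)) \<noteq> 0" using assms r by simp
  show "(\<lambda>n. vs n (orb (fs n) (m*p+r)) / (\<Prod>j<r. Df (fs n) (orb (fs n) (Suc (m*p+j)))))
        \<longlonglongrightarrow> v (orb f (m*p+r)) / (\<Prod>j<r. Df f (orb f (Suc (m*p+j))))"
    by (rule tendsto_divide[OF vs_orb_conv p(1)[OF _ a] p(2)[OF _ a]]) simp_all
qed

end




context tailsetup begin

lemma J_tail3:
  assumes "\<not> c_periodic g \<or> c_period g \<ge> K"
  shows "\<bar>J g w - (\<Sum>i<K. tm g w i)\<bar> \<le> W * lam / (lam - 1) / lam ^ K"
proof -
  have "BB K \<le> W * lam / (lam - 1) / lam ^ K"
    unfolding BB_def using Dfn_ge0[of K] Dfn_pos[of K] lam W0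
    by (simp add: divide_divide_eq_left[symmetric] del: divide_divide_eq_left)
       (intro divide_left_mono mult_nonneg_nonneg, auto intro: mult_pos_pos)
  then show ?thesis using J_tail[OF assms] by linarith
qed

end

lemma cpp:
  assumes "c_periodic h"
  shows "c_period h \<ge> 1" "orb h (c_period h) = 0"
    "\<And>i. 1 \<le> i \<Longrightarrow> i < c_period h \<Longrightarrow> orb h i \<noteq> 0"
proof -
  have ex: "\<exists>p. p \<ge> 1 \<and> (h ^^ p) 0 = 0" using assms unfolding c_periodic_def by auto
  show "c_period h \<ge> 1" "orb h (c_period h) = 0"
    using LeastI_ex[OF ex] unfolding c_period_def orb_def by auto
  show "\<And>i. 1 \<le> i \<Longrightarrow> i < c_period h \<Longrightarrow> orb h i \<noteq> 0"
    using not_less_Least unfolding c_period_def orb_def by blast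
qed

context ms begin

lemma nonper:
  assumes np: "\<not> c_periodic f" and J0: "\<And>n. J (fs n) (vs n) = 0"
  shows "J f v = 0"
proof -
  obtain lam W where l: "lam > 1" and tf: "tailsetup f v lam W"
    and tfs: "eventually (\<lambda>n. tailsetup (fs n) (vs n) lam W) sequentially" by (rule unif)
  define T where "T = W * lam / (lam - 1)"
  have nz: "\<And>i. i \<ge> 1 \<Longrightarrow> orb f i \<noteq> 0" using np unfolding c_periodic_def orb_def by auto
  have key: "\<bar>J f v\<bar> \<le> 2 * T / lam ^ N" for N
  proof -
    have ev1: "eventually (\<lambda>n. \<forall>i\<in>{1..N}. orb (fs n) i \<noteq> 0) sequentially"
      by (rule eventually_ball_finite) (use tendsto_imp_eventually_ne[OF orb_conv nz] in auto)
    have ev: "eventually (\<lambda>n. \<bar>\<Sum>i<N. tm (fs n) (vs n) i\<bar> \<le> T / lam ^ N) sequentially"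
      using ev1 tfs
    proof eventually_elim
      case (elim n)
      have c: "\<not> c_periodic (fs n) \<or> c_period (fs n) \<ge> N"
      proof (rule ccontr)
        assume "\<not> ?thesis"
        then have "c_periodic (fs n)" "c_period (fs n) < N" by auto
        with cpp[OF this(1)] elim(1) show False by force
      qed
      show ?case using tailsetup.J_tail3[OF elim(2) c] J0[of n] unfolding T_def by simp
    qed
    have lim: "(\<lambda>n. \<Sum>i<N. tm (fs n) (vs n) i) \<longlonglongrightarrow> (\<Sum>i<N. tm f v i)"
      by (intro tendsto_sum tm_conv nz) auto
    have a: "\<bar>\<Sum>i<N. tm f v i\<bar> \<le> T / lam ^ N"
      by (rule tendsto_upperbound[OF tendsto_rabs[OF lim] ev]) simp
    have b: "\<bar>J f v - (\<Sum>i<N. tm f v i)\<bar> \<le> T / lam ^ N"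
      using tailsetup.J_tail3[OF tf] np unfolding T_def by simp
    show ?thesis using a b by linarith
  qed
  show ?thesis
  proof (rule ccontr)
    assume ne: "J f v \<noteq> 0"
    then have pos: "\<bar>J f v\<bar> > 0" by simp
    obtain N where N: "2 * T / \<bar>J f v\<bar> < lam ^ N" using real_arch_pow[OF l] by blast
    have lp: "lam ^ N > 0" using l by simp
    from N pos have "2 * T < \<bar>J f v\<bar> * lam ^ N" by (simp add: pos_divide_less_eq mult.commute)
    then have "2 * T / lam ^ N < \<bar>J f v\<bar>" using lp by (simp add: pos_divide_less_eq)
    with key[of N] show False by linarith
  qed
qed

end



context tailsetup begin
lemma J_tail4:
  assumes "\<not> c_periodic g \<or> c_period g \<ge> K"
  shows "\<bar>J g w - (\<Sum>i<K. tm g w i)\<bar> \<le> W * lam / (lam - 1) / \<bar>Dfn g K (g 0)\<bar>"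
  using J_tail[OF assms] unfolding BB_def by (simp add: divide_divide_eq_left)
end

lemma J_per: "c_periodic g \<Longrightarrow> J g w = (\<Sum>i<c_period g. tm g w i)"
  by (simp add: J_def tm_def orb_def)

context ms begin

lemma per:
  assumes pp: "c_periodic f" and p2: "c_period f \<ge> 2"
    and kap: "\<bar>Dfn f (c_period f - 1) (f 0)\<bar> * min \<bar>pD {0..1} 1 f 0\<bar> \<bar>pD {-1..0} 1 f 0\<bar> > 2"
    and J0: "\<And>n. J (fs n) (vs n) = 0"
  shows "J f v = 0"
proof -
  define p where "p = c_period f"
  obtain q where pq: "p = Suc q" using p2 unfolding p_def by (cases "c_period f") auto
  have p1: "p \<ge> 1" using pq by simp
  obtain lam W where l: "lam > 1" and tf: "tailsetup f v lam W"
    and tfs: "eventually (\<lambda>n. tailsetup (fs n) (vs n) lam W) sequentially" by (rule unif)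
  have W0: "W \<ge> 0" using tailsetup.W0[OF tf] .
  define T where "T = W * lam / (lam - 1)"
  have T0: "T \<ge> 0" unfolding T_def using W0 l by simp
  have op: "orb f p = 0" using cpp(2)[OF pp] unfolding p_def .
  have nzr: "\<And>r. 1 \<le> r \<Longrightarrow> r < p \<Longrightarrow> orb f r \<noteq> 0" using cpp(3)[OF pp] unfolding p_def .
  have nzi: "orb f i \<noteq> 0" if "\<not> p dvd i" for i
  proof -
    have "orb f i = orb f ((i div p) * p + i mod p)" by simp
    also have "\<dots> = orb f (i mod p)" by (rule orb_period[OF op])
    moreover have "i mod p \<noteq> 0" using that by (simp add: dvd_eq_mod_eq_0)
    moreover have "i mod p < p" using p1 by simp
    ultimately show ?thesis using nzr[of "i mod p"] by simp
  qed
  have nzS: "orb f (Suc (m*p + j)) \<noteq> 0" if "j < q" for m j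
  proof -
    have "orb f (Suc (m*p + j)) = orb f (m*p + Suc j)" by simp
    also have "\<dots> = orb f (Suc j)" by (rule orb_period[OF op])
    finally show ?thesis using nzr[of "Suc j"] that pq by simp
  qed
  define A where "A = Dfn f q (f 0)"
  define mn where "mn = min \<bar>pD {0..1} 1 f 0\<bar> \<bar>pD {-1..0} 1 f 0\<bar>"
  define a where "a = \<bar>A\<bar>"
  have kap': "a * mn > 2" using kap unfolding a_def A_def mn_def p_def[symmetric] pq by simp
  have a0: "a \<ge> 0" and mn0: "mn \<ge> 0" unfolding a_def mn_def by auto
  have apos: "a > 0" and mpos: "mn > 0"
    using kap' a0 mn0 by (auto simp: zero_less_mult_iff less_le)
  define rho where "rho = (a * mn + 2) / 2"
  have rho2: "rho > 2" and rhok: "rho < a * mn" using kap' unfolding rho_def by auto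
  define ep where "ep = min (min a mn) ((a*mn - rho)/(a+mn))"
  have ep0: "ep > 0" unfolding ep_def using apos mpos rhok by auto
  define P where "P = bt f v p 0"
  have JP: "J f v = P" unfolding P_def bt_0 J_per[OF pp] p_def ..
  have btP: "\<And>m. bt f v p m = P" unfolding P_def by (rule bt_period[OF op])
  define sig where "sig = (rho - 2) / (rho - 1)"
  have sig0: "sig > 0" unfolding sig_def using rho2 by simp
  have key: "\<bar>P\<bar> * sig \<le> T / rho ^ M" if M1: "M \<ge> 1" for M
  proof -
    have E1: "eventually (\<lambda>n. \<forall>i\<in>{..<M*p}. \<not> p dvd i \<longrightarrow> orb (fs n) i \<noteq> 0) sequentially"
    proof (rule eventually_ball_finite)
      show "\<forall>i\<in>{..<M*p}. eventually (\<lambda>n. \<not> p dvd i \<longrightarrow> orb (fs n) i \<noteq> 0) sequentially"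
      proof
        fix i
        show "eventually (\<lambda>n. \<not> p dvd i \<longrightarrow> orb (fs n) i \<noteq> 0) sequentially"
        proof (cases "p dvd i")
          case False
          show ?thesis using tendsto_imp_eventually_ne[OF orb_conv nzi[OF False]] by (rule eventually_mono) simp
        qed simp
      qed
    qed simp
    have E2: "eventually (\<lambda>n. \<forall>m\<in>{..<M}. \<bar>(\<Prod>r<q. Df (fs n) (orb (fs n) (Suc (m*p+r)))) * Df (fs n) (orb (fs n) (Suc m * p))\<bar> \<ge> rho) sequentially"
    proof (rule eventually_ball_finite)
      show "\<forall>m\<in>{..<M}. eventually (\<lambda>n. \<bar>(\<Prod>r<q. Df (fs n) (orb (fs n) (Suc (m*p+r)))) * Df (fs n) (orb (fs n) (Suc m * p))\<bar> \<ge> rho) sequentially"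
      proof
        fix m
        note pc = prodDf_conv[of "{..<q}" "\<lambda>r. Suc (m*p+r)"]
        have lim: "(\<lambda>n. \<Prod>r<q. Df (fs n) (orb (fs n) (Suc (m*p+r)))) \<longlonglongrightarrow> (\<Prod>r<q. Df f (orb f (Suc (m*p+r))))"
          by (rule pc(1)) (use nzS in auto)
        have "(\<Prod>r<q. Df f (orb f (Suc (m*p+r)))) = (\<Prod>r<q. Df f (orb f (Suc r)))"
        proof (rule prod.cong[OF refl])
          fix r
          have "orb f (Suc (m*p+r)) = orb f (m*p + Suc r)" by simp
          also have "\<dots> = orb f (Suc r)" by (rule orb_period[OF op])
          finally show "Df f (orb f (Suc (m*p+r))) = Df f (orb f (Suc r))" by simp
        qed
        also have "\<dots> = A" unfolding A_def Dfn_orb ..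
        finally have lim2: "(\<lambda>n. \<bar>\<Prod>r<q. Df (fs n) (orb (fs n) (Suc (m*p+r)))\<bar>) \<longlonglongrightarrow> a"
          using tendsto_rabs[OF lim] unfolding a_def by simp
        have ev1: "eventually (\<lambda>n. \<bar>\<Prod>r<q. Df (fs n) (orb (fs n) (Suc (m*p+r)))\<bar> > a - ep) sequentially"
          by (rule order_tendstoD(1)[OF lim2]) (use ep0 in simp)
        have y0: "(\<lambda>n. orb (fs n) (Suc m * p)) \<longlonglongrightarrow> 0"
          using orb_conv[of "Suc m * p"] orb_period[OF op, of "Suc m" 0] by (simp add: orb_def)
        have ev2: "eventually (\<lambda>n. \<bar>Df (fs n) (orb (fs n) (Suc m * p))\<bar> \<ge> mn - ep) sequentially"
          unfolding mn_def by (rule Df_near0[OF y0 orbI[OF pfs] ep0])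
        show "eventually (\<lambda>n. \<bar>(\<Prod>r<q. Df (fs n) (orb (fs n) (Suc (m*p+r)))) * Df (fs n) (orb (fs n) (Suc m * p))\<bar> \<ge> rho) sequentially"
          using ev1 ev2
        proof eventually_elim
          case (elim n)
          show ?case unfolding abs_mult
            by (rule prod_ge_lemma[OF apos mpos rhok]) (use elim in \<open>auto simp: ep_def\<close>)
        qed
      qed
    qed simp
    define err where "err n = (\<Sum>m<M. \<bar>bt (fs n) (vs n) p m - P\<bar>)" for n
    have errlim: "err \<longlonglongrightarrow> 0"
    proof -
      have "(\<lambda>n. \<Sum>m<M. \<bar>bt (fs n) (vs n) p m - P\<bar>) \<longlonglongrightarrow> (\<Sum>m<M. \<bar>P - P\<bar>)"
      proof (intro tendsto_sum tendsto_rabs tendsto_diff tendsto_const)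
        fix m
        have "(\<lambda>n. bt (fs n) (vs n) p m) \<longlonglongrightarrow> bt f v p m"
        proof (rule bt_conv)
          fix r j assume "r < p" "j < r"
          then have "j < q" using pq by simp
          then show "orb f (Suc (m*p+j)) \<noteq> 0" by (rule nzS)
        qed
        then show "(\<lambda>n. bt (fs n) (vs n) p m) \<longlonglongrightarrow> P" using btP by simp
      qed
      then show ?thesis unfolding err_def by simp
    qed
    have ev: "eventually (\<lambda>n. \<bar>P\<bar> * sig \<le> err n + T / rho ^ M) sequentially"
      using E1 E2 tfs
    proof eventually_elim
      case (elim n)
      define g where "g = fs n"
      define w where "w = vs n"
      define E where "E = Eb g p"
      have ts: "tailsetup g w lam W" using elim(3) unfolding g_def w_def .
      have Eb_ge: "m \<le> M \<Longrightarrow> \<bar>E m\<bar> \<ge> rho ^ m" for m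
      proof (induction m)
        case 0 then show ?case unfolding E_def Eb_0 by simp
      next
        case (Suc m)
        then have mM: "m \<in> {..<M}" by simp
        have "E (Suc m) = E m * ((\<Prod>r<q. Df g (orb g (Suc (m*p+r)))) * Df g (orb g (Suc m * p)))"
          unfolding E_def by (rule Eb_Suc[OF pq])
        define X where "X = \<bar>(\<Prod>r<q. Df g (orb g (Suc (m*p+r)))) * Df g (orb g (Suc m * p))\<bar>"
        have e: "\<bar>E (Suc m)\<bar> = \<bar>E m\<bar> * X" unfolding X_def using \<open>E (Suc m) = _\<close> by (simp add: abs_mult)
        have x: "X \<ge> rho" using elim(2) mM unfolding g_def X_def by blast
        have em: "\<bar>E m\<bar> \<ge> rho ^ m" using Suc by simp
        have "rho ^ m * rho \<le> \<bar>E m\<bar> * X"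
          by (rule mult_mono[OF em x]) (use rho2 in auto)
        then have "\<bar>E (Suc m)\<bar> \<ge> rho ^ m * rho" using e by simp
        then show ?case by (simp add: mult.commute)
      qed
      have E1': "m \<le> M \<Longrightarrow> \<bar>E m\<bar> \<ge> 1" for m
        using Eb_ge[of m] one_le_power[of rho m] rho2 by linarith
      define S where "S k = (\<Sum>m<k. bt g w p m / E m)" for k
      have exM: "\<exists>k. 1 \<le> k \<and> k \<le> M \<and> \<bar>J g w - S k\<bar> \<le> T / rho ^ M"
      proof (cases "c_periodic g \<and> c_period g < M * p")
        case True
        define q' where "q' = c_period g"
        have q1: "q' \<ge> 1" and oq: "orb g q' = 0" using cpp[of g] True unfolding q'_def by auto
        have "p dvd q'" using elim(1) True oq unfolding q'_def g_def by auto
        then obtain k where qk: "q' = k * p" by (auto simp: dvd_def mult.commute)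
        have k1: "k \<ge> 1" using q1 qk by (cases k) auto
        have kM: "k \<le> M" using True qk unfolding q'_def by auto
        have "J g w = (\<Sum>i<k*p. tm g w i)" using J_per[of g w] True qk unfolding q'_def by simp
        also have "\<dots> = S k" unfolding S_def E_def by (rule block_decomp)
        finally show ?thesis using k1 kM T0 rho2 by (intro exI[of _ k]) auto
      next
        case False
        then have c: "\<not> c_periodic g \<or> c_period g \<ge> M * p" by auto
        have "\<bar>J g w - (\<Sum>i<M*p. tm g w i)\<bar> \<le> T / \<bar>Dfn g (M*p) (g 0)\<bar>"
          using tailsetup.J_tail4[OF ts c] unfolding T_def .
        also have "(\<Sum>i<M*p. tm g w i) = S M" unfolding S_def E_def by (rule block_decomp)
        also have "Dfn g (M*p) (g 0) = E M" unfolding E_def Eb_def ..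
        also have "T / \<bar>E M\<bar> \<le> T / rho ^ M"
        proof -
          have "rho ^ M > 0" using rho2 by simp
          then have "\<bar>E M\<bar> > 0" using Eb_ge[of M] by linarith
          then show ?thesis using Eb_ge[of M] \<open>rho ^ M > 0\<close> T0 by (intro divide_left_mono) auto
        qed
        finally show ?thesis using M1 by (intro exI[of _ M]) auto
      qed
      then obtain k where k: "1 \<le> k" "k \<le> M" "\<bar>J g w - S k\<bar> \<le> T / rho ^ M" by blast
      have Sk: "\<bar>S k\<bar> \<le> T / rho ^ M" using k(3) J0[of n] unfolding g_def w_def by simp
      have sg: "\<bar>\<Sum>m<k. 1 / E m\<bar> \<ge> sig"
        unfolding sig_def by (rule sigma_lemma[OF rho2 k(1)]) (use Eb_ge k(2) in \<open>auto simp: E_def Eb_0\<close>)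
      have "P * (\<Sum>m<k. 1 / E m) - S k = (\<Sum>m<k. (P - bt g w p m) / E m)"
        unfolding S_def by (simp add: sum_distrib_left sum_subtractf diff_divide_distrib)
      also have "\<bar>\<dots>\<bar> \<le> (\<Sum>m<k. \<bar>(P - bt g w p m) / E m\<bar>)" by (rule sum_abs)
      also have "\<dots> \<le> (\<Sum>m<k. \<bar>bt g w p m - P\<bar>)"
      proof (rule sum_mono)
        fix m assume "m \<in> {..<k}"
        then have "\<bar>E m\<bar> \<ge> 1" using E1' k(2) by auto
        have "\<bar>(P - bt g w p m) / E m\<bar> = \<bar>bt g w p m - P\<bar> / \<bar>E m\<bar>"
          by (simp add: abs_divide abs_minus_commute)
        also have "\<dots> \<le> \<bar>bt g w p m - P\<bar> / 1"
          by (rule divide_left_mono) (use \<open>\<bar>E m\<bar> \<ge> 1\<close> in auto)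
        finally show "\<bar>(P - bt g w p m) / E m\<bar> \<le> \<bar>bt g w p m - P\<bar>" by simp
      qed
      also have "\<dots> \<le> err n" unfolding err_def g_def w_def
        by (rule sum_mono2) (use k(2) in auto)
      finally have d: "\<bar>P * (\<Sum>m<k. 1 / E m) - S k\<bar> \<le> err n" .
      have "\<bar>P\<bar> * sig \<le> \<bar>P\<bar> * \<bar>\<Sum>m<k. 1 / E m\<bar>" using sg by (intro mult_left_mono) auto
      also have "\<dots> = \<bar>P * (\<Sum>m<k. 1 / E m)\<bar>" by (simp add: abs_mult)
      finally show ?case using d Sk by linarith
    qed
    have "(\<lambda>n. err n + T / rho ^ M) \<longlonglongrightarrow> 0 + T / rho ^ M" by (intro tendsto_add errlim tendsto_const)
    then show ?thesis using tendsto_lowerbound[OF _ ev] by simp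
  qed
  show ?thesis
  proof (rule ccontr)
    assume "J f v \<noteq> 0"
    then have pos: "\<bar>P\<bar> * sig > 0" using JP sig0 by simp
    have r1: "rho > 1" using rho2 by simp
    obtain N where N: "T / (\<bar>P\<bar> * sig) < rho ^ N" using real_arch_pow[OF r1] by blast
    define M where "M = max N 1"
    have "rho ^ N \<le> rho ^ M" unfolding M_def using r1 by (intro power_increasing) auto
    with N have N': "T / (\<bar>P\<bar> * sig) < rho ^ M" by linarith
    have lp: "rho ^ M > 0" using r1 by simp
    from N' pos have "T < rho ^ M * (\<bar>P\<bar> * sig)" by (simp add: pos_divide_less_eq)
    moreover have "\<bar>P\<bar> * sig * rho ^ M = rho ^ M * (\<bar>P\<bar> * sig)" by (rule mult.commute)
    ultimately have "T < \<bar>P\<bar> * sig * rho ^ M" by linarith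
    then have "T / rho ^ M < \<bar>P\<bar> * sig" using pos_divide_less_eq[OF lp] by blast
    with key[of M] show False unfolding M_def by linarith
  qed
qed

end


theorem corollary3p1:
  fixes f :: "real \<Rightarrow> real" and fs :: "nat \<Rightarrow> real \<Rightarrow> real"
    and v :: "real \<Rightarrow> real" and vs :: "nat \<Rightarrow> real \<Rightarrow> real"
  assumes "good f"
    and "\<And>n. pw_expanding_unimodal (fs n)"
    and "(\<lambda>n. Bnorm 1 (\<lambda>x. fs n x - f x)) \<longlonglongrightarrow> 0"
    and "Bk 0 v" and "\<And>n. Bk 0 (vs n)"
    and "(\<lambda>n. Bnorm 0 (\<lambda>x. vs n x - v x)) \<longlonglongrightarrow> 0"
    and "\<And>n. J (fs n) (vs n) = 0"
  shows "J f v = 0"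
proof -
  have pf: "pw_expanding_unimodal f" using assms(1) unfolding good_def by simp
  interpret ms f fs v vs
    by (rule ms.intro) (use pf assms(2-6) in auto)
  show ?thesis
  proof (cases "c_periodic f")
    case False
    then show ?thesis by (rule nonper) (rule assms(7))
  next
    case True
    then have "c_period f \<ge> 2 \<and>
       \<bar>Dfn f (c_period f - 1) (f 0)\<bar> * min \<bar>pD {0..1} 1 f 0\<bar> \<bar>pD {-1..0} 1 f 0\<bar> > 2"
      using assms(1) unfolding good_def by simp
    then show ?thesis using per[OF True] assms(7) by blast
  qed
qed

end
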